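(* Let $\mathcal S$ be a trajectory set such that for every $S\in\mathcal S$ and every $j\in\mathbb N_0$ the stopped trajectory $(S_{\min\{i,j\}})_{i\in\mathbb N_0}$ belongs to $\mathcal S$. Then (LOP) and (K) hold for $\mathcal S$.
   Context: Fix $s_0\in\mathbb R$. A trajectory set is any set $\mathcal S$ of real sequences $S=(S_j)_{j\in\mathbb N_0}$ with $S_0=s_0$. A simple portfolio $(V,n,H)$ consists of $V\in\mathbb R$, $n\in\mathbb N$ and nonanticipating functions $H_i:\mathcal S\to\mathbb R$, $0\le i\le n-1$ (i.e. $H_i(S)=h_i(S_0,\dots,S_i)$ for some arbitrary $h_i:\mathbb R^{i+1}\to\mathbb R$). Its wealth is $\Pi^{V,n,H}_j(S)=V+\sum_{i=0}^{\min\{j,n\}-1}H_i(S)(S_{i+1}-S_i)$ and $\Pi^{V,n,H}_\infty:=\Pi^{V,n,H}_n$; it is positive if $V\ge0$ and $\Pi^{V,n,H}_\infty\ge0$ on $\mathcal S$. A positive generalized portfolio is a sequence $(V_m,n_m,H_m)_{m\in\mathbb N}$ of positive simple portfolios; it superhedges $f:\mathcal S\to[0,+\infty]$ with initial endowment $\sum_{m\ge1}V_m$ if $f\le\sum_{m=1}^\infty\Pi^{V_m,n_m,H_m}_\infty$ on $\mathcal S$. $\bar I(f)$ is the infimum of initial endowments of positive generalized portfolios superhedging $f$. Let $\mathcal E=\{\Pi^{V,n,H}_\infty\}$ over all simple portfolios. (LOP): whenever two simple portfolios have equal terminal wealth $\Pi_\infty$ at every $S\in\mathcal S$, their initial endowments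 coincide; under (LOP), $I:\mathcal E\to\mathbb R$, $I(\Pi^{V,n,H}_\infty)=V$, is well defined. (K): $I(f)+\bar I(f^-)\le\bar I(f^+)$ for every $f\in\mathcal E$ ($f^\pm$ positive/negative parts). *)

theory Defs
  imports Complex_Main "HOL-Library.Extended_Real"
begin

type_synonym traj = "nat \<Rightarrow> real"

definition trajectory_set :: "real \<Rightarrow> traj set \<Rightarrow> bool" where
  "trajectory_set s0 \<S> \<longleftrightarrow> (\<forall>S\<in>\<S>. S 0 = s0)"

text \<open>Strategies are given as functions H :: nat => traj => real; H i is the position
  on [i, i+1]. Nonanticipating: H i S depends only on S 0, ..., S i.\<close>
definition nonanticipating :: "nat \<Rightarrow> (nat \<Rightarrow> traj \<Rightarrow> real) \<Rightarrow> bool" where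
  "nonanticipating n H \<longleftrightarrow>
     (\<forall>i<n. \<forall>S S'. (\<forall>k\<le>i. S k = S' k) \<longrightarrow> H i S = H i S')"

definition simple_portfolio :: "real \<Rightarrow> nat \<Rightarrow> (nat \<Rightarrow> traj \<Rightarrow> real) \<Rightarrow> bool" where
  "simple_portfolio V n H \<longleftrightarrow> n \<ge> 1 \<and> nonanticipating n H"

definition wealth :: "real \<Rightarrow> nat \<Rightarrow> (nat \<Rightarrow> traj \<Rightarrow> real) \<Rightarrow> nat \<Rightarrow> traj \<Rightarrow> real" where
  "wealth V n H j S = V + (\<Sum>i<min j n. H i S * (S (Suc i) - S i))"

definition wealth_inf :: "real \<Rightarrow> nat \<Rightarrow> (nat \<Rightarrow> traj \<Rightarrow> real) \<Rightarrow> traj \<Rightarrow> real" where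
  "wealth_inf V n H S = wealth V n H n S"

definition positive_portfolio ::
  "traj set \<Rightarrow> real \<Rightarrow> nat \<Rightarrow> (nat \<Rightarrow> traj \<Rightarrow> real) \<Rightarrow> bool" where
  "positive_portfolio \<S> V n H \<longleftrightarrow>
     simple_portfolio V n H \<and> V \<ge> 0 \<and> (\<forall>S\<in>\<S>. wealth_inf V n H S \<ge> 0)"

definition superhedges ::
  "traj set \<Rightarrow> (nat \<Rightarrow> real) \<Rightarrow> (nat \<Rightarrow> nat) \<Rightarrow> (nat \<Rightarrow> nat \<Rightarrow> traj \<Rightarrow> real)
     \<Rightarrow> (traj \<Rightarrow> ereal) \<Rightarrow> bool" where
  "superhedges \<S> Vs ns Hs f \<longleftrightarrow>
     (\<forall>m. positive_portfolio \<S> (Vs m) (ns m) (Hs m)) \<and>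
     (\<forall>S\<in>\<S>. f S \<le> (\<Sum>m. ereal (wealth_inf (Vs m) (ns m) (Hs m) S)))"

text \<open>Outer integral: infimum of initial endowments (inf of the empty set is +oo).\<close>
definition Ibar :: "traj set \<Rightarrow> (traj \<Rightarrow> ereal) \<Rightarrow> ereal" where
  "Ibar \<S> f = (INF p \<in> {(Vs, ns, Hs). superhedges \<S> Vs ns Hs f}.
                 (case p of (Vs, ns, Hs) \<Rightarrow> (\<Sum>m. ereal (Vs m))))"

definition LOP :: "traj set \<Rightarrow> bool" where
  "LOP \<S> \<longleftrightarrow> (\<forall>V n H V' n' H'. simple_portfolio V n H \<longrightarrow> simple_portfolio V' n' H' \<longrightarrow>
      (\<forall>S\<in>\<S>. wealth_inf V n H S = wealth_inf V' n' H' S) \<longrightarrow> V = V')"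

text \<open>Condition (K), with I(Pi_inf of (V,n,H)) = V (well defined under LOP),
  f^+ = max f 0 and f^- = max (-f) 0.\<close>
definition condK :: "traj set \<Rightarrow> bool" where
  "condK \<S> \<longleftrightarrow> (\<forall>V n H. simple_portfolio V n H \<longrightarrow>
      ereal V + Ibar \<S> (\<lambda>S. ereal (max (- wealth_inf V n H S) 0))
        \<le> Ibar \<S> (\<lambda>S. ereal (max (wealth_inf V n H S) 0)))"

end

theory Submission
  imports Defs
begin

lemma wealth_Suc:
  "wealth V n H (Suc j) S = wealth V n H j S + (if j < n then H j S * (S (Suc j) - S j) else 0)"
proof (cases "j < n")
  case True
  then have "min (Suc j) n = Suc (min j n)" by simp
  then show ?thesis using True by (simp add: wealth_def)
next
  case False
  then show ?thesis by (simp add: wealth_def min_def)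
qed

lemma wealth_prefix:
  assumes "nonanticipating n H" "\<forall>k\<le>j. S k = S' k"
  shows "wealth V n H j S = wealth V n H j S'"
proof -
  have "\<And>i. i < min j n \<Longrightarrow> H i S * (S (Suc i) - S i) = H i S' * (S' (Suc i) - S' i)"
  proof -
    fix i assume i: "i < min j n"
    have "H i S = H i S'" using assms i unfolding nonanticipating_def by auto
    moreover have "S (Suc i) = S' (Suc i)" "S i = S' i" using assms(2) i by auto
    ultimately show "H i S * (S (Suc i) - S i) = H i S' * (S' (Suc i) - S' i)" by simp
  qed
  then show ?thesis unfolding wealth_def by (intro arg_cong[where f="\<lambda>x. V + x"] sum.cong) auto
qed

lemma wealth_stop:
  assumes "nonanticipating n H"
  shows "wealth_inf V n H (\<lambda>i. S (min i j)) = wealth V n H j S"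
proof -
  let ?T = "\<lambda>i. S (min i j)"
  have "(\<Sum>i<n. H i ?T * (?T (Suc i) - ?T i)) = (\<Sum>i<min j n. H i S * (S (Suc i) - S i))"
  proof -
    have "(\<Sum>i<n. H i ?T * (?T (Suc i) - ?T i)) = (\<Sum>i<n. if i < j then H i S * (S (Suc i) - S i) else 0)"
    proof (rule sum.cong)
      fix i assume i: "i \<in> {..<n}"
      show "H i ?T * (?T (Suc i) - ?T i) = (if i < j then H i S * (S (Suc i) - S i) else 0)"
      proof (cases "i < j")
        case True
        have "H i ?T = H i S" using assms i True unfolding nonanticipating_def by auto
        then show ?thesis using True by (simp add: min_def)
      next
        case False then show ?thesis by (simp add: min_def)
      qed
    qed simp
    also have "\<dots> = (\<Sum>i\<in>{..<n} \<inter> {i. i < j}. H i S * (S (Suc i) - S i))"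
      by (simp add: sum.inter_restrict)
    also have "{..<n} \<inter> {i. i < j} = {..<min j n}" by auto
    finally show ?thesis .
  qed
  then show ?thesis by (simp add: wealth_inf_def wealth_def)
qed

lemma wealth_stopped_scaled:
  assumes "\<forall>i<n. q i S \<longleftrightarrow> i < t"
  shows "wealth (d * V) n (\<lambda>i S'. if q i S' then d * H i S' else 0) n S = d * wealth V n H t S"
proof -
  have "(\<Sum>i<n. (if q i S then d * H i S else 0) * (S (Suc i) - S i))
      = (\<Sum>i<n. if i < t then d * (H i S * (S (Suc i) - S i)) else 0)"
    using assms by (intro sum.cong) auto
  also have "\<dots> = (\<Sum>i\<in>{..<n} \<inter> {i. i < t}. d * (H i S * (S (Suc i) - S i)))"
    by (simp add: sum.inter_restrict)
  also have "{..<n} \<inter> {i. i < t} = {..<min t n}" by auto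
  finally show ?thesis by (simp add: wealth_def sum_distrib_left algebra_simps)
qed

lemma LOP_part:
  assumes "\<S> \<noteq> {}" "\<forall>S\<in>\<S>. \<forall>j::nat. (\<lambda>i. S (min i j)) \<in> \<S>"
  shows "LOP \<S>"
  unfolding LOP_def
proof (intro allI impI)
  fix V n H V' n' H'
  assume eq: "\<forall>S\<in>\<S>. wealth_inf V n H S = wealth_inf V' n' H' S"
  obtain S where S: "S \<in> \<S>" using assms by auto
  let ?T = "\<lambda>i. S (min i 0)"
  have "?T \<in> \<S>" using assms(2) S by blast
  then have "wealth_inf V n H ?T = wealth_inf V' n' H' ?T" using eq by auto
  then show "V = V'" by (simp add: wealth_inf_def wealth_def)
qed


definition Wsum :: "(nat \<Rightarrow> real) \<Rightarrow> (nat \<Rightarrow> nat) \<Rightarrow> (nat \<Rightarrow> nat \<Rightarrow> traj \<Rightarrow> real) \<Rightarrow> nat \<Rightarrow> traj \<Rightarrow> ereal" where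
  "Wsum Vs ns Hs j S = (\<Sum>m. ereal (wealth (Vs m) (ns m) (Hs m) j S))"

definition okp :: "(nat \<Rightarrow> real) \<Rightarrow> (nat \<Rightarrow> nat) \<Rightarrow> (nat \<Rightarrow> nat \<Rightarrow> traj \<Rightarrow> real) \<Rightarrow> nat \<Rightarrow> traj \<Rightarrow> bool" where
  "okp Vs ns Hs i S \<longleftrightarrow> (\<forall>k\<le>i. Wsum Vs ns Hs k S < \<infinity>)"

definition hh :: "(nat \<Rightarrow> nat) \<Rightarrow> (nat \<Rightarrow> nat \<Rightarrow> traj \<Rightarrow> real) \<Rightarrow> nat \<Rightarrow> nat \<Rightarrow> traj \<Rightarrow> real" where
  "hh ns Hs m i S = (if i < ns m then Hs m i S else 0)"

definition mainpos :: "(nat \<Rightarrow> real) \<Rightarrow> (nat \<Rightarrow> nat) \<Rightarrow> (nat \<Rightarrow> nat \<Rightarrow> traj \<Rightarrow> real) \<Rightarrow> (nat \<Rightarrow> traj \<Rightarrow> real) \<Rightarrow> nat \<Rightarrow> traj \<Rightarrow> real" where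
  "mainpos Vs ns Hs H i S = (if okp Vs ns Hs i S \<and> summable (\<lambda>m. hh ns Hs m i S)
     then (\<Sum>m. hh ns Hs m i S) - H i S else 0)"

lemma okp_prefix:
  assumes "\<And>m. nonanticipating (ns m) (Hs m)" "\<forall>k\<le>i. S k = S' k"
  shows "okp Vs ns Hs i S = okp Vs ns Hs i S'"
proof -
  have "\<And>k. k \<le> i \<Longrightarrow> Wsum Vs ns Hs k S = Wsum Vs ns Hs k S'"
  proof -
    fix k assume k: "k \<le> i"
    have "\<And>m. wealth (Vs m) (ns m) (Hs m) k S = wealth (Vs m) (ns m) (Hs m) k S'"
      using assms k by (intro wealth_prefix) auto
    then show "Wsum Vs ns Hs k S = Wsum Vs ns Hs k S'" unfolding Wsum_def by simp
  qed
  then show ?thesis unfolding okp_def by auto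
qed

lemma hh_prefix:
  assumes "\<And>m. nonanticipating (ns m) (Hs m)" "\<forall>k\<le>i. S k = S' k"
  shows "hh ns Hs m i S = hh ns Hs m i S'"
  using assms unfolding hh_def nonanticipating_def by auto

lemma mainpos_nonant:
  assumes "\<And>m. nonanticipating (ns m) (Hs m)" "nonanticipating n H"
  shows "nonanticipating n (mainpos Vs ns Hs H)"
  unfolding nonanticipating_def
proof (intro allI impI)
  fix i and S S' :: traj assume i: "i < n" and eq: "\<forall>k\<le>i. S k = S' k"
  have "okp Vs ns Hs i S = okp Vs ns Hs i S'" using okp_prefix[OF assms(1) eq] .
  moreover have "(\<lambda>m. hh ns Hs m i S) = (\<lambda>m. hh ns Hs m i S')" using assms eq hh_prefix by blast
  moreover have "H i S = H i S'" using assms(2) i eq unfolding nonanticipating_def by auto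
  ultimately show "mainpos Vs ns Hs H i S = mainpos Vs ns Hs H i S'" unfolding mainpos_def by simp
qed

lemma w_Suc:
  "wealth (Vs m) (ns m) (Hs m) (Suc j) S = wealth (Vs m) (ns m) (Hs m) j S + hh ns Hs m j S * (S (Suc j) - S j)"
  by (simp add: wealth_Suc hh_def)

lemma wnn:
  assumes stop: "\<forall>S\<in>\<S>. \<forall>j::nat. (\<lambda>i. S (min i j)) \<in> \<S>"
    and pp: "positive_portfolio \<S> V n H" and S: "S \<in> \<S>"
  shows "0 \<le> wealth V n H j S"
proof -
  have T: "(\<lambda>i. S (min i j)) \<in> \<S>" using stop S by blast
  have na: "nonanticipating n H" using pp unfolding positive_portfolio_def simple_portfolio_def by auto
  have "0 \<le> wealth_inf V n H (\<lambda>i. S (min i j))" using pp T unfolding positive_portfolio_def by auto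
  then show ?thesis using wealth_stop[OF na] by simp
qed


lemma Wge:
  assumes stop: "\<forall>S\<in>\<S>. \<forall>j::nat. (\<lambda>i. S (min i j)) \<in> \<S>"
    and pp: "\<And>m. positive_portfolio \<S> (Vs m) (ns m) (Hs m)"
    and sup: "\<And>S. S\<in>\<S> \<Longrightarrow> ereal (max (wealth_inf V n H S) 0) \<le> (\<Sum>m. ereal (wealth_inf (Vs m) (ns m) (Hs m) S))"
    and sp: "simple_portfolio V n H"
    and S: "S \<in> \<S>"
  shows "ereal (wealth V n H j S) \<le> Wsum Vs ns Hs j S"
proof -
  let ?T = "\<lambda>i. S (min i j)"
  have T: "?T \<in> \<S>" using stop S by blast
  have na: "nonanticipating n H" using sp unfolding simple_portfolio_def by auto
  have nam: "\<And>m. nonanticipating (ns m) (Hs m)" using pp unfolding positive_portfolio_def simple_portfolio_def by auto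
  have "(\<lambda>m. ereal (wealth_inf (Vs m) (ns m) (Hs m) ?T)) = (\<lambda>m. ereal (wealth (Vs m) (ns m) (Hs m) j S))"
    using wealth_stop[OF nam] by simp
  then have "ereal (max (wealth V n H j S) 0) \<le> Wsum Vs ns Hs j S"
    using sup[OF T] wealth_stop[OF na] unfolding Wsum_def by simp
  moreover have "ereal (wealth V n H j S) \<le> ereal (max (wealth V n H j S) 0)" by simp
  ultimately show ?thesis by (rule order_trans[rotated])
qed

lemma Wfin:
  assumes nn: "\<And>m. 0 \<le> wealth (Vs m) (ns m) (Hs m) j S"
    and fin: "Wsum Vs ns Hs j S < \<infinity>"
  shows "summable (\<lambda>m. wealth (Vs m) (ns m) (Hs m) j S) \<and>
         Wsum Vs ns Hs j S = ereal (\<Sum>m. wealth (Vs m) (ns m) (Hs m) j S)"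
  using summable_ereal[OF nn] suminf_ereal[OF nn] fin unfolding Wsum_def by auto

lemma Wsum_summable:
  assumes "summable f" "\<And>m. wealth (Vs m) (ns m) (Hs m) j S = f m"
  shows "Wsum Vs ns Hs j S = ereal (suminf f)"
proof -
  have "(\<lambda>m. ereal (f m)) sums ereal (suminf f)" using assms(1) sums_ereal summable_sums by blast
  then show ?thesis unfolding Wsum_def assms(2) using sums_unique by metis
qed

lemma main_induct:
  assumes stop: "\<forall>S\<in>\<S>. \<forall>j::nat. (\<lambda>i. S (min i j)) \<in> \<S>"
    and pp: "\<And>m. positive_portfolio \<S> (Vs m) (ns m) (Hs m)"
    and sup: "\<And>S. S\<in>\<S> \<Longrightarrow> ereal (max (wealth_inf V n H S) 0) \<le> (\<Sum>m. ereal (wealth_inf (Vs m) (ns m) (Hs m) S))"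
    and sp: "simple_portfolio V n H"
    and cdef: "(\<Sum>m. ereal (Vs m)) = ereal c"
    and S: "S \<in> \<S>"
  shows "j \<le> n \<Longrightarrow> (okp Vs ns Hs j S \<longrightarrow> ereal (wealth (c - V) n (mainpos Vs ns Hs H) j S + wealth V n H j S) = Wsum Vs ns Hs j S)
     \<and> 0 \<le> wealth (c - V) n (mainpos Vs ns Hs H) j S"
proof (induction j)
  case 0
  have W0: "Wsum Vs ns Hs 0 S = ereal c" using cdef unfolding Wsum_def by (simp add: wealth_def)
  have "ereal (wealth V n H 0 S) \<le> Wsum Vs ns Hs 0 S" using Wge[OF stop pp sup sp S] .
  then have "V \<le> c" using W0 by (simp add: wealth_def)
  then show ?case using W0 by (simp add: wealth_def)
next
  case (Suc j)
  let ?P = "mainpos Vs ns Hs H"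
  let ?Y = "\<lambda>j. wealth (c - V) n ?P j S"
  let ?Pi = "\<lambda>j. wealth V n H j S"
  let ?w = "\<lambda>j m. wealth (Vs m) (ns m) (Hs m) j S"
  let ?D = "S (Suc j) - S j"
  have jn: "j < n" using Suc.prems by simp
  have IH: "(okp Vs ns Hs j S \<longrightarrow> ereal (?Y j + ?Pi j) = Wsum Vs ns Hs j S) \<and> 0 \<le> ?Y j"
    using Suc.IH jn by simp
  have Ys: "?Y (Suc j) = ?Y j + ?P j S * ?D" using jn by (simp add: wealth_Suc)
  have Ps: "?Pi (Suc j) = ?Pi j + H j S * ?D" using jn by (simp add: wealth_Suc)
  have ws: "\<And>m. ?w (Suc j) m = ?w j m + hh ns Hs m j S * ?D" by (rule w_Suc)
  have nn: "\<And>k m. 0 \<le> ?w k m" using wnn[OF stop pp S] .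
  have ge: "\<And>k. ereal (?Pi k) \<le> Wsum Vs ns Hs k S" using Wge[OF stop pp sup sp S] .
  have fin_summ: "Wsum Vs ns Hs (Suc j) S = ereal (suminf (?w j) + suminf (\<lambda>m. hh ns Hs m j S) * ?D)"
    if sw: "summable (?w j)" and sh: "summable (\<lambda>m. hh ns Hs m j S)"
  proof -
    have s2: "summable (\<lambda>m. hh ns Hs m j S * ?D)" using sh by (rule summable_mult2)
    have "summable (\<lambda>m. ?w j m + hh ns Hs m j S * ?D)" using sw s2 by (rule summable_add)
    then have "Wsum Vs ns Hs (Suc j) S = ereal (\<Sum>m. ?w j m + hh ns Hs m j S * ?D)"
      using Wsum_summable ws by blast
    also have "(\<Sum>m. ?w j m + hh ns Hs m j S * ?D) = suminf (?w j) + suminf (\<lambda>m. hh ns Hs m j S) * ?D"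
      using suminf_add[OF sw s2] suminf_mult2[OF sh] by simp
    finally show ?thesis .
  qed
  show ?case
  proof (cases "okp Vs ns Hs (Suc j) S")
    case True
    then have okj: "okp Vs ns Hs j S" unfolding okp_def by auto
    have f1: "Wsum Vs ns Hs j S < \<infinity>" "Wsum Vs ns Hs (Suc j) S < \<infinity>" using True unfolding okp_def by auto
    obtain sw: "summable (?w j)" and Wj: "Wsum Vs ns Hs j S = ereal (suminf (?w j))"
      using Wfin[OF nn f1(1)] by blast
    obtain sw1: "summable (?w (Suc j))" and Wj1: "Wsum Vs ns Hs (Suc j) S = ereal (suminf (?w (Suc j)))"
      using Wfin[OF nn f1(2)] by blast
    have Yj: "?Y j + ?Pi j = suminf (?w j)" using IH okj Wj by simp
    have eq: "ereal (?Y (Suc j) + ?Pi (Suc j)) = Wsum Vs ns Hs (Suc j) S"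
    proof (cases "summable (\<lambda>m. hh ns Hs m j S)")
      case sh: True
      have "?P j S = suminf (\<lambda>m. hh ns Hs m j S) - H j S" using okj sh unfolding mainpos_def by simp
      then have Pj: "?P j S + H j S = suminf (\<lambda>m. hh ns Hs m j S)" by simp
      have "?Y (Suc j) + ?Pi (Suc j) = (?Y j + ?Pi j) + (?P j S + H j S) * ?D"
        using Ys Ps by (simp add: algebra_simps)
      also have "\<dots> = suminf (?w j) + suminf (\<lambda>m. hh ns Hs m j S) * ?D" using Yj Pj by simp
      finally show ?thesis using fin_summ[OF sw sh] by simp
    next
      case sh: False
      have D0: "?D = 0"
      proof (rule ccontr)
        assume D: "?D \<noteq> 0"
        have "(\<lambda>m. hh ns Hs m j S) = (\<lambda>m. (?w (Suc j) m - ?w j m) / ?D)" using ws D by auto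
        moreover have "summable (\<lambda>m. (?w (Suc j) m - ?w j m) / ?D)"
          using summable_diff[OF sw1 sw] by (rule summable_divide)
        ultimately show False using sh by simp
      qed
      have "\<And>m. ?w (Suc j) m = ?w j m" using ws D0 by auto
      then have "Wsum Vs ns Hs (Suc j) S = Wsum Vs ns Hs j S" unfolding Wsum_def by presburger
      then show ?thesis using Ys Ps D0 IH okj by simp
    qed
    have "ereal (?Pi (Suc j)) \<le> ereal (?Y (Suc j) + ?Pi (Suc j))" using eq ge by simp
    then have "0 \<le> ?Y (Suc j)" by simp
    then show ?thesis using eq by simp
  next
    case False
    have "?P j S = 0"
    proof (cases "okp Vs ns Hs j S")
      case okj: True
      have inf: "\<not> Wsum Vs ns Hs (Suc j) S < \<infinity>"
        using False okj unfolding okp_def by (metis le_Suc_eq)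
      have f1: "Wsum Vs ns Hs j S < \<infinity>" using okj unfolding okp_def by auto
      have sw: "summable (?w j)" using Wfin[OF nn f1] by blast
      have "\<not> summable (\<lambda>m. hh ns Hs m j S)"
        using fin_summ[OF sw] inf by auto
      then show ?thesis unfolding mainpos_def by simp
    next
      case False
      then show ?thesis unfolding mainpos_def by simp
    qed
    then show ?thesis using Ys IH False by simp
  qed
qed


lemma okp_anti: "okp Vs ns Hs i S \<Longrightarrow> k \<le> i \<Longrightarrow> okp Vs ns Hs k S"
  unfolding okp_def by auto

lemma antimono_cut:
  assumes "\<not> okp Vs ns Hs N S"
  shows "\<forall>i. okp Vs ns Hs i S \<longleftrightarrow> i < (LEAST i. \<not> okp Vs ns Hs i S)"
proof
  fix i
  show "okp Vs ns Hs i S \<longleftrightarrow> i < (LEAST i. \<not> okp Vs ns Hs i S)"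
  proof
    assume qi: "okp Vs ns Hs i S"
    have "\<not> okp Vs ns Hs (LEAST i. \<not> okp Vs ns Hs i S) S" using assms by (metis (mono_tags, lifting) LeastI)
    then show "i < (LEAST i. \<not> okp Vs ns Hs i S)" using okp_anti qi by (metis not_le)
  next
    assume "i < (LEAST i. \<not> okp Vs ns Hs i S)"
    then show "okp Vs ns Hs i S" using not_less_Least by blast
  qed
qed

lemma exists_cut:
  "\<exists>t. \<forall>i<N. okp Vs ns Hs i S \<longleftrightarrow> i < t"
proof (cases "\<exists>M. \<not> okp Vs ns Hs M S")
  case True
  then obtain M where "\<not> okp Vs ns Hs M S" by blast
  then show ?thesis using antimono_cut by blast
next
  case False
  then show ?thesis by (intro exI[of _ N]) auto
qed

lemma key:
  assumes stop: "\<forall>S\<in>\<S>. \<forall>j::nat. (\<lambda>i. S (min i j)) \<in> \<S>"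
    and ne: "\<S> \<noteq> {}"
    and pp: "\<And>m. positive_portfolio \<S> (Vs m) (ns m) (Hs m)"
    and sup: "\<And>S. S\<in>\<S> \<Longrightarrow> ereal (max (wealth_inf V n H S) 0) \<le> (\<Sum>m. ereal (wealth_inf (Vs m) (ns m) (Hs m) S))"
    and sp: "simple_portfolio V n H"
    and cdef: "(\<Sum>m. ereal (Vs m)) = ereal c"
    and d: "0 < d"
  shows "Ibar \<S> (\<lambda>S. ereal (max (- wealth_inf V n H S) 0)) \<le> ereal (c - V + d * c)"
proof -
  define P where "P = mainpos Vs ns Hs H"
  define Vs' where "Vs' = (\<lambda>m. case m of 0 \<Rightarrow> c - V | Suc k \<Rightarrow> d * Vs k)"
  define ns' where "ns' = (\<lambda>m. case m of 0 \<Rightarrow> n | Suc k \<Rightarrow> ns k)"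
  define Hs' where "Hs' = (\<lambda>m. case m of 0 \<Rightarrow> P
      | Suc k \<Rightarrow> (\<lambda>i S. if okp Vs ns Hs i S then d * Hs k i S else 0))"
  have nam: "\<And>m. nonanticipating (ns m) (Hs m)" using pp unfolding positive_portfolio_def simple_portfolio_def by auto
  have n1: "\<And>m. 1 \<le> ns m" using pp unfolding positive_portfolio_def simple_portfolio_def by auto
  have Vnn: "\<And>m. 0 \<le> Vs m" using pp unfolding positive_portfolio_def by auto
  have na: "nonanticipating n H" and nn1: "1 \<le> n" using sp unfolding simple_portfolio_def by auto
  have MI: "\<And>S j. S \<in> \<S> \<Longrightarrow> j \<le> n \<Longrightarrow> (okp Vs ns Hs j S \<longrightarrow> ereal (wealth (c - V) n P j S + wealth V n H j S) = Wsum Vs ns Hs j S)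
     \<and> 0 \<le> wealth (c - V) n P j S"
    unfolding P_def using main_induct[OF stop pp sup sp cdef] by blast
  have wn: "\<And>S k j. S \<in> \<S> \<Longrightarrow> 0 \<le> wealth (Vs k) (ns k) (Hs k) j S" using wnn[OF stop pp] by blast
  have stopped: "\<And>S k. \<exists>t. wealth_inf (d * Vs k) (ns k) (\<lambda>i S. if okp Vs ns Hs i S then d * Hs k i S else 0) S
        = d * wealth (Vs k) (ns k) (Hs k) t S \<and> (\<forall>i. okp Vs ns Hs i S \<longleftrightarrow> i < t \<or> (\<forall>i. okp Vs ns Hs i S))"
  proof -
    fix S k
    show "?thesis S k"
    proof (cases "\<exists>M. \<not> okp Vs ns Hs M S")
      case True
      then obtain M where M: "\<not> okp Vs ns Hs M S" by blast
      let ?t = "LEAST i. \<not> okp Vs ns Hs i S"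
      have cut: "\<forall>i. okp Vs ns Hs i S \<longleftrightarrow> i < ?t"
        using antimono_cut[OF M] by blast
      then show ?thesis unfolding wealth_inf_def using wealth_stopped_scaled[of "ns k" "\<lambda>i S. okp Vs ns Hs i S" S ?t d "Vs k" "Hs k"]
        by blast
    next
      case False
      then show ?thesis unfolding wealth_inf_def using wealth_stopped_scaled[of "ns k" "\<lambda>i S. okp Vs ns Hs i S" S "ns k" d "Vs k" "Hs k"]
        by blast
    qed
  qed
  obtain S0 where S0: "S0 \<in> \<S>" using ne by blast
  have cV: "0 \<le> c - V" using MI[OF S0, of 0] by (simp add: wealth_def)
  have pos: "\<And>m. positive_portfolio \<S> (Vs' m) (ns' m) (Hs' m)"
  proof -
    fix m show "positive_portfolio \<S> (Vs' m) (ns' m) (Hs' m)"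
    proof (cases m)
      case 0
      have "nonanticipating n P" unfolding P_def using mainpos_nonant[OF nam na] .
      moreover have "\<forall>S\<in>\<S>. 0 \<le> wealth_inf (c - V) n P S" using MI unfolding wealth_inf_def by blast
      ultimately show ?thesis using 0 cV nn1 unfolding positive_portfolio_def simple_portfolio_def Vs'_def ns'_def Hs'_def by simp
    next
      case (Suc k)
      have "nonanticipating (ns k) (\<lambda>i S. if okp Vs ns Hs i S then d * Hs k i S else 0)"
        unfolding nonanticipating_def
      proof (intro allI impI)
        fix i and S S' :: traj assume i: "i < ns k" and eq: "\<forall>j\<le>i. S j = S' j"
        have "okp Vs ns Hs i S = okp Vs ns Hs i S'" using okp_prefix[OF nam eq] .
        moreover have "Hs k i S = Hs k i S'" using nam[of k] i eq unfolding nonanticipating_def by blast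
        ultimately show "(if okp Vs ns Hs i S then d * Hs k i S else 0) = (if okp Vs ns Hs i S' then d * Hs k i S' else 0)"
          by simp
      qed
      moreover have "\<forall>S\<in>\<S>. 0 \<le> wealth_inf (d * Vs k) (ns k) (\<lambda>i S. if okp Vs ns Hs i S then d * Hs k i S else 0) S"
      proof
        fix S assume S: "S \<in> \<S>"
        obtain t where "wealth_inf (d * Vs k) (ns k) (\<lambda>i S. if okp Vs ns Hs i S then d * Hs k i S else 0) S
            = d * wealth (Vs k) (ns k) (Hs k) t S" using stopped by blast
        then show "0 \<le> wealth_inf (d * Vs k) (ns k) (\<lambda>i S. if okp Vs ns Hs i S then d * Hs k i S else 0) S"
          using wn[OF S] d by simp
      qed
      ultimately show ?thesis using Suc n1[of k] Vnn[of k] d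
        unfolding positive_portfolio_def simple_portfolio_def Vs'_def ns'_def Hs'_def by simp
    qed
  qed
  have sup': "\<forall>S\<in>\<S>. ereal (max (- wealth_inf V n H S) 0) \<le> (\<Sum>m. ereal (wealth_inf (Vs' m) (ns' m) (Hs' m) S))"
  proof
    fix S assume S: "S \<in> \<S>"
    let ?g = "\<lambda>m. ereal (wealth_inf (Vs' m) (ns' m) (Hs' m) S)"
    have gnn: "\<And>m. 0 \<le> ?g m" using pos S unfolding positive_portfolio_def by auto
    have g0: "?g 0 = ereal (wealth (c - V) n P n S)" unfolding Vs'_def ns'_def Hs'_def wealth_inf_def by simp
    have gS: "\<And>k. ?g (Suc k) = ereal (wealth_inf (d * Vs k) (ns k) (\<lambda>i S. if okp Vs ns Hs i S then d * Hs k i S else 0) S)"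
      unfolding Vs'_def ns'_def Hs'_def by simp
    show "ereal (max (- wealth_inf V n H S) 0) \<le> (\<Sum>m. ?g m)"
    proof (cases "okp Vs ns Hs n S")
      case True
      have m: "ereal (wealth (c - V) n P n S + wealth V n H n S) = Wsum Vs ns Hs n S" "0 \<le> wealth (c - V) n P n S"
        using MI[OF S, of n] True by auto
      have "0 \<le> Wsum Vs ns Hs n S" unfolding Wsum_def
        by (rule suminf_nonneg[OF summable_ereal_pos]) (use wn[OF S] in auto)
      then have "0 \<le> wealth (c - V) n P n S + wealth V n H n S" using m(1) by (metis ereal_less_eq(5))
      then have "ereal (max (- wealth_inf V n H S) 0) \<le> ?g 0" using g0 m(2) by (simp add: wealth_inf_def)
      also have "?g 0 \<le> (\<Sum>m. ?g m)" using suminf_upper[of ?g 1, OF gnn] by simp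
      finally show ?thesis .
    next
      case False
      obtain tt where cut: "\<forall>i. okp Vs ns Hs i S \<longleftrightarrow> i < tt" using antimono_cut[OF False] by blast
      let ?t = tt
      have nt: "\<not> okp Vs ns Hs ?t S" using cut by blast
      have Winf: "\<not> Wsum Vs ns Hs ?t S < \<infinity>"
      proof
        assume W: "Wsum Vs ns Hs ?t S < \<infinity>"
        have lt: "Wsum Vs ns Hs k S < \<infinity>" if k: "k < ?t" for k
        proof -
          have "okp Vs ns Hs k S" using cut k by simp
          then show ?thesis unfolding okp_def by simp
        qed
        have "\<forall>k\<le>?t. Wsum Vs ns Hs k S < \<infinity>"
        proof (intro allI impI)
          fix k assume "k \<le> ?t"
          then show "Wsum Vs ns Hs k S < \<infinity>" using W lt by (cases "k = ?t") auto
        qed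
        then have "okp Vs ns Hs ?t S" unfolding okp_def .
        then show False using nt by blast
      qed
      have gS': "\<And>k. ?g (Suc k) = ereal d * ereal (wealth (Vs k) (ns k) (Hs k) ?t S)"
        using gS wealth_stopped_scaled[of _ "\<lambda>i S. okp Vs ns Hs i S" S ?t d] cut by (simp add: wealth_inf_def)
      have "(\<Sum>k. ?g (k + 1)) = ereal d * Wsum Vs ns Hs ?t S"
        unfolding Wsum_def using gS' suminf_cmult_ereal[of "\<lambda>k. ereal (wealth (Vs k) (ns k) (Hs k) ?t S)" "ereal d"] wn[OF S] d
        by simp
      also have "\<dots> = \<infinity>" using Winf d by simp
      finally have "(\<Sum>k. ?g (k + 1)) = \<infinity>" .
      then have "(\<Sum>m. ?g m) = \<infinity>" using suminf_ereal_offset_le[of ?g 1, OF gnn] by simp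
      then show ?thesis by simp
    qed
  qed
  have sV: "summable Vs" using summable_ereal[of Vs, OF Vnn] cdef by simp
  have cV2: "suminf Vs = c" using suminf_ereal[of Vs, OF Vnn] cdef by simp
  have "(\<lambda>k. d * Vs k) sums (d * c)" using sums_mult[OF summable_sums[OF sV]] cV2 by simp
  then have "(\<lambda>k. Vs' (Suc k)) sums (d * c)" unfolding Vs'_def by simp
  then have "Vs' sums (d * c + (c - V))" using sums_Suc[of Vs'] unfolding Vs'_def by simp
  then have "(\<lambda>m. ereal (Vs' m)) sums ereal (c - V + d * c)" using sums_ereal by (simp add: algebra_simps)
  then have cost: "(\<Sum>m. ereal (Vs' m)) = ereal (c - V + d * c)" using sums_unique by metis
  have mem: "(Vs', ns', Hs') \<in> {(Vs, ns, Hs). superhedges \<S> Vs ns Hs (\<lambda>S. ereal (max (- wealth_inf V n H S) 0))}"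
    using pos sup' unfolding superhedges_def by simp
  show ?thesis unfolding Ibar_def
    by (rule INF_lower2[OF mem]) (simp add: cost)
qed

lemma K_part:
  assumes stop: "\<forall>S\<in>\<S>. \<forall>j::nat. (\<lambda>i. S (min i j)) \<in> \<S>"
    and ne: "\<S> \<noteq> {}"
  shows "condK \<S>"
  unfolding condK_def
proof (intro allI impI)
  fix V n H assume sp: "simple_portfolio V n H"
  let ?fp = "\<lambda>S. ereal (max (wealth_inf V n H S) 0)"
  let ?fm = "\<lambda>S. ereal (max (- wealth_inf V n H S) 0)"
  have bound: "ereal V + Ibar \<S> ?fm \<le> (\<Sum>m. ereal (Vs m))" if sh: "superhedges \<S> Vs ns Hs ?fp" for Vs ns Hs
  proof -
    have pp: "\<And>m. positive_portfolio \<S> (Vs m) (ns m) (Hs m)" using sh unfolding superhedges_def by auto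
    have sup: "\<And>S. S\<in>\<S> \<Longrightarrow> ?fp S \<le> (\<Sum>m. ereal (wealth_inf (Vs m) (ns m) (Hs m) S))"
      using sh unfolding superhedges_def by auto
    have Vnn: "\<And>m. 0 \<le> Vs m" using pp unfolding positive_portfolio_def by auto
    have s0: "0 \<le> (\<Sum>m. ereal (Vs m))"
      by (rule suminf_nonneg[OF summable_ereal_pos]) (use Vnn in auto)
    show ?thesis
    proof (cases "(\<Sum>m. ereal (Vs m)) = \<infinity>")
      case True then show ?thesis by simp
    next
      case False
      then obtain c where cdef: "(\<Sum>m. ereal (Vs m)) = ereal c" using s0 by (cases "(\<Sum>m. ereal (Vs m))") auto
      have c0: "0 \<le> c" using s0 cdef by simp
      have "ereal V + Ibar \<S> ?fm \<le> ereal c + ereal e" if e: "0 < e" for e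
      proof -
        define dd where "dd = e / (c + 1)"
        have dd: "0 < dd" using e c0 unfolding dd_def by simp
        have ddc: "dd * c \<le> e"
        proof -
          have "dd * c = e * (c / (c + 1))" unfolding dd_def by simp
          also have "\<dots> \<le> e * 1" using e c0 by (intro mult_left_mono) auto
          finally show ?thesis by simp
        qed
        have "Ibar \<S> ?fm \<le> ereal (c - V + dd * c)" using key[OF stop ne pp sup sp cdef dd] .
        then have "ereal V + Ibar \<S> ?fm \<le> ereal V + ereal (c - V + dd * c)" by (rule add_left_mono)
        also have "\<dots> = ereal (c + dd * c)" by simp
        also have "\<dots> \<le> ereal c + ereal e" using ddc by simp
        finally show ?thesis .
      qed
      then have "ereal V + Ibar \<S> ?fm \<le> ereal c" by (rule ereal_le_epsilon2)
      then show ?thesis using cdef by simp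
    qed
  qed
  show "ereal V + Ibar \<S> ?fm \<le> Ibar \<S> ?fp"
    unfolding Ibar_def[of \<S> ?fp]
  proof (rule INF_greatest)
    fix p assume "p \<in> {(Vs, ns, Hs). superhedges \<S> Vs ns Hs ?fp}"
    then obtain Vs ns Hs where p: "p = (Vs, ns, Hs)" "superhedges \<S> Vs ns Hs ?fp" by auto
    then show "ereal V + Ibar \<S> ?fm \<le> (case p of (Vs, ns, Hs) \<Rightarrow> \<Sum>m. ereal (Vs m))" using bound by simp
  qed
qed

theorem corollary5p2:
  fixes s0 :: real and \<S> :: "(nat \<Rightarrow> real) set"
  assumes "trajectory_set s0 \<S>"
    and "\<S> \<noteq> {}"
    and "\<forall>S\<in>\<S>. \<forall>j::nat. (\<lambda>i. S (min i j)) \<in> \<S>"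
  shows "LOP \<S> \<and> condK \<S>"
  using LOP_part[OF assms(2,3)] K_part[OF assms(3,2)] by blast

end
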